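(* Let $((A_i,B_i))_{i\in\mathbb N}$ be a strictly increasing sequence of tight separations of a connected locally finite graph $G$, with limit $(A,B)=(\bigcup_iA_i,\bigcap_iB_i)$. If the sequence is non-exhaustive (i.e. $B\neq\emptyset$), then $A\cap B$ is infinite.
   Context: A separation of $G$ is an unordered pair $\{A,B\}$ of subsets of $V(G)$ with $A\cup B=V(G)$ and no edge between $A\setminus B$ and $B\setminus A$; oriented separations $(A,B)$ are ordered by $(A,B)\le(C,D)$ iff $A\subseteq C$ and $B\supseteq D$. For $X\subseteq V(G)$, a component $K$ of $G-X$ is tight if $N_G(K)=X$. A separation $\{A,B\}$ is tight if both $A\setminus B$ and $B\setminus A$ contain the vertex set of a tight component of $G-(A\cap B)$. A strictly increasing sequence is exhaustive if its limit $(A,B)$ has $B=\emptyset$. *)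

theory Defs
  imports Main
begin

definition graph :: "'a set \<Rightarrow> ('a \<Rightarrow> 'a \<Rightarrow> bool) \<Rightarrow> bool" where
  "graph V E \<longleftrightarrow> (\<forall>u v. E u v \<longrightarrow> u \<in> V \<and> v \<in> V \<and> E v u \<and> u \<noteq> v)"

definition locally_finite :: "'a set \<Rightarrow> ('a \<Rightarrow> 'a \<Rightarrow> bool) \<Rightarrow> bool" where
  "locally_finite V E \<longleftrightarrow> (\<forall>v\<in>V. finite {u. E v u})"

definition reach_in :: "('a \<Rightarrow> 'a \<Rightarrow> bool) \<Rightarrow> 'a set \<Rightarrow> 'a \<Rightarrow> 'a \<Rightarrow> bool" where
  "reach_in E S x y \<longleftrightarrow> x \<in> S \<and> (\<lambda>u v. u \<in> S \<and> v \<in> S \<and> E u v)\<^sup>*\<^sup>* x y"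

definition connected_graph :: "'a set \<Rightarrow> ('a \<Rightarrow> 'a \<Rightarrow> bool) \<Rightarrow> bool" where
  "connected_graph V E \<longleftrightarrow> V \<noteq> {} \<and> (\<forall>x\<in>V. \<forall>y\<in>V. reach_in E V x y)"

definition component_of :: "'a set \<Rightarrow> ('a \<Rightarrow> 'a \<Rightarrow> bool) \<Rightarrow> 'a set \<Rightarrow> 'a set \<Rightarrow> bool" where
  "component_of V E X K \<longleftrightarrow> (\<exists>x\<in>V - X. K = {y. reach_in E (V - X) x y})"

definition nbh :: "'a set \<Rightarrow> ('a \<Rightarrow> 'a \<Rightarrow> bool) \<Rightarrow> 'a set \<Rightarrow> 'a set" where
  "nbh V E K = {v \<in> V - K. \<exists>u\<in>K. E u v}"

definition tight_component :: "'a set \<Rightarrow> ('a \<Rightarrow> 'a \<Rightarrow> bool) \<Rightarrow> 'a set \<Rightarrow> 'a set \<Rightarrow> bool" where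
  "tight_component V E X K \<longleftrightarrow> component_of V E X K \<and> nbh V E K = X"

definition separation :: "'a set \<Rightarrow> ('a \<Rightarrow> 'a \<Rightarrow> bool) \<Rightarrow> 'a set \<Rightarrow> 'a set \<Rightarrow> bool" where
  "separation V E A B \<longleftrightarrow> A \<union> B = V \<and> (\<forall>a\<in>A - B. \<forall>b\<in>B - A. \<not> E a b)"

definition tight_separation :: "'a set \<Rightarrow> ('a \<Rightarrow> 'a \<Rightarrow> bool) \<Rightarrow> 'a set \<Rightarrow> 'a set \<Rightarrow> bool" where
  "tight_separation V E A B \<longleftrightarrow> separation V E A B
     \<and> (\<exists>K. tight_component V E (A \<inter> B) K \<and> K \<subseteq> A - B)
     \<and> (\<exists>K. tight_component V E (A \<inter> B) K \<and> K \<subseteq> B - A)"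

definition sep_le :: "'a set \<times> 'a set \<Rightarrow> 'a set \<times> 'a set \<Rightarrow> bool" where
  "sep_le S T \<longleftrightarrow> fst S \<subseteq> fst T \<and> snd T \<subseteq> snd S"

definition sep_less :: "'a set \<times> 'a set \<Rightarrow> 'a set \<times> 'a set \<Rightarrow> bool" where
  "sep_less S T \<longleftrightarrow> sep_le S T \<and> S \<noteq> T"

end

theory Submission
  imports Defs
begin

lemma sep_swap: assumes "graph V E" "separation V E A B" shows "separation V E B A"
  using assms unfolding graph_def separation_def by blast

lemma side:
  assumes g: "graph V E" and s: "separation V E A B" and r: "reach_in E S x y"
    and d: "S \<inter> (A \<inter> B) = {}" and x: "x \<in> A - B"
  shows "y \<in> A - B"
proof -
  from r have "(\<lambda>u v. u \<in> S \<and> v \<in> S \<and> E u v)\<^sup>*\<^sup>* x y" by (simp add: reach_in_def)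
  then show ?thesis
  proof (induction rule: rtranclp_induct)
    case base show ?case using x .
  next
    case (step y w)
    then have "w \<in> V" "E y w" "w \<in> S" using g unfolding graph_def by auto
    then show ?case using step.IH s d unfolding separation_def by blast
  qed
qed

lemma path_to_set:
  assumes "(\<lambda>u v. u \<in> V \<and> v \<in> V \<and> E u v)\<^sup>*\<^sup>* z y" "z \<in> V" "z \<notin> X" "y \<in> X"
  shows "\<exists>f. reach_in E (V - X) z f \<and> (\<exists>y'\<in>X. E f y')"
proof -
  have "(\<exists>f. reach_in E (V - X) z f \<and> (\<exists>y'\<in>X. E f y')) \<or> (y \<notin> X \<and> reach_in E (V - X) z y)"
    using assms(1)
  proof (induction rule: rtranclp_induct)
    case base then show ?case using assms(2,3) by (simp add: reach_in_def)
  next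
    case (step y w)
    show ?case
    proof (cases "\<exists>f. reach_in E (V - X) z f \<and> (\<exists>y'\<in>X. E f y')")
      case True then show ?thesis by blast
    next
      case False
      with step.IH have yX: "y \<notin> X" and ry: "reach_in E (V - X) z y" by auto
      show ?thesis
      proof (cases "w \<in> X")
        case True then show ?thesis using ry step.hyps(2) by blast
      next
        case False
        have "(\<lambda>u v. u \<in> V - X \<and> v \<in> V - X \<and> E u v)\<^sup>*\<^sup>* z w"
          using ry step.hyps(2) False yX unfolding reach_in_def
          by (auto intro: rtranclp.rtrancl_into_rtrancl)
        then show ?thesis using False ry by (simp add: reach_in_def)
      qed
    qed
  qed
  then show ?thesis using assms(4) by blast
qed

lemma eventually_all_finite:
  fixes P :: "'a \<Rightarrow> nat \<Rightarrow> bool"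
  assumes "finite F" "\<forall>f\<in>F. \<exists>n. \<forall>m\<ge>n. P f m"
  shows "\<exists>N. \<forall>f\<in>F. \<forall>m\<ge>N. P f m"
  using assms
proof (induction F rule: finite_induct)
  case empty then show ?case by simp
next
  case (insert x F)
  then obtain N where N: "\<forall>f\<in>F. \<forall>m\<ge>N. P f m" by auto
  from insert.prems obtain n where n: "\<forall>m\<ge>n. P x m" by auto
  show ?case
  proof (rule exI[of _ "max N n"], intro ballI allI impI)
    fix f m assume f: "f \<in> insert x F" and m: "max N n \<le> m"
    have "N \<le> m" "n \<le> m" using m by auto
    then show "P f m" using f N n by auto
  qed
qed

theorem mainTheorem5:
  fixes V :: "'a set" and E :: "'a \<Rightarrow> 'a \<Rightarrow> bool"
    and A B :: "nat \<Rightarrow> 'a set"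
  assumes "graph V E" and "connected_graph V E" and "locally_finite V E"
    and "\<And>i. tight_separation V E (A i) (B i)"
    and "\<And>i. sep_less (A i, B i) (A (Suc i), B (Suc i))"
    and "(\<Inter>i. B i) \<noteq> {}"
  shows "infinite ((\<Union>i. A i) \<inter> (\<Inter>i. B i))"
proof
  assume fin: "finite ((\<Union>i. A i) \<inter> (\<Inter>i. B i))"
  define LA where "LA = (\<Union>i. A i)"
  define LB where "LB = (\<Inter>i. B i)"
  define X where "X = LA \<inter> LB"
  have finX: "finite X" using fin by (simp add: LA_def LB_def X_def)
  have g: "graph V E" using assms(1) .
  have sym: "\<And>u v. E u v \<Longrightarrow> E v u" and inV: "\<And>u v. E u v \<Longrightarrow> u \<in> V \<and> v \<in> V"
    using g unfolding graph_def by auto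
  have sepi: "\<And>i. separation V E (A i) (B i)" using assms(4) unfolding tight_separation_def by auto
  have Aup: "\<And>i. A i \<subseteq> A (Suc i)" and Bdown: "\<And>i. B (Suc i) \<subseteq> B i"
    using assms(5) unfolding sep_less_def sep_le_def by auto
  have Amono: "\<And>i j. i \<le> j \<Longrightarrow> A i \<subseteq> A j" by (metis lift_Suc_mono_le Aup)
  have Bmono: "\<And>i j. i \<le> j \<Longrightarrow> B j \<subseteq> B i" by (metis lift_Suc_antimono_le Bdown)
  have AB_V: "\<And>i. A i \<union> B i = V" using sepi unfolding separation_def by auto
  have LAB: "LA \<union> LB = V" using AB_V unfolding LA_def LB_def by blast
  have sepL: "separation V E LA LB"
    unfolding separation_def
  proof (intro conjI ballI)
    show "LA \<union> LB = V" by (rule LAB)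
    fix a b assume a: "a \<in> LA - LB" and b: "b \<in> LB - LA"
    from a obtain i j where "a \<in> A i" "a \<notin> B j" by (auto simp: LA_def LB_def)
    let ?m = "max i j"
    have "a \<in> A ?m" using \<open>a \<in> A i\<close> Amono[of i ?m] by auto
    moreover have "a \<notin> B ?m" using \<open>a \<notin> B j\<close> Bmono[of j ?m] by auto
    moreover have "b \<in> B ?m" "b \<notin> A ?m" using b by (auto simp: LA_def LB_def)
    ultimately show "\<not> E a b" using sepi[of ?m] unfolding separation_def by blast
  qed
  have sepL': "separation V E LB LA" using sep_swap[OF g sepL] .
  show False
  proof (cases "X = {}")
    case True
    obtain K where K: "tight_component V E (A 0 \<inter> B 0) K" "K \<subseteq> A 0 - B 0"
      using assms(4)[of 0] unfolding tight_separation_def by auto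
    then obtain a where a: "a \<in> K"
      unfolding tight_component_def component_of_def reach_in_def by auto
    have aL: "a \<in> LA - LB" using a K(2) by (auto simp: LA_def LB_def)
    obtain b where b: "b \<in> LB" using assms(6) LB_def by auto
    have bV: "b \<in> V" using b LAB by auto
    have aV: "a \<in> V" using aL LAB by auto
    have "reach_in E V a b" using assms(2) aV bV unfolding connected_graph_def by auto
    moreover have "V \<inter> (LA \<inter> LB) = {}" using True X_def by auto
    ultimately have "b \<in> LA - LB" using side[OF g sepL _ _ aL] by blast
    with b show False by auto
  next
    case False
    then obtain y0 where y0: "y0 \<in> X" by auto
    define F where "F = X \<union> (\<Union>y\<in>X. {u. E y u})"
    have XV: "X \<subseteq> V" using LAB X_def by auto
    have finF: "finite F" using finX XV assms(3) unfolding F_def locally_finite_def by auto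
    have ev: "\<forall>f\<in>F. \<exists>n. \<forall>m\<ge>n. (f \<in> LA \<longrightarrow> f \<in> A m) \<and> (f \<notin> LB \<longrightarrow> f \<notin> B m)"
    proof
      fix f assume "f \<in> F"
      obtain n1 where n1: "f \<in> LA \<longrightarrow> f \<in> A n1" using LA_def by auto
      obtain n2 where n2: "f \<notin> LB \<longrightarrow> f \<notin> B n2" using LB_def by auto
      show "\<exists>n. \<forall>m\<ge>n. (f \<in> LA \<longrightarrow> f \<in> A m) \<and> (f \<notin> LB \<longrightarrow> f \<notin> B m)"
      proof (intro exI allI impI conjI)
        fix m assume m: "max n1 n2 \<le> m"
        show "f \<in> LA \<Longrightarrow> f \<in> A m" using n1 Amono[of n1 m] m by auto
        show "f \<notin> LB \<Longrightarrow> f \<notin> B m" using n2 Bmono[of n2 m] m by auto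
      qed
    qed
    obtain N where N: "\<forall>f\<in>F. \<forall>m\<ge>N. (f \<in> LA \<longrightarrow> f \<in> A m) \<and> (f \<notin> LB \<longrightarrow> f \<notin> B m)"
      using eventually_all_finite[OF finF ev] by auto
    have XF: "X \<subseteq> F" by (auto simp: F_def)
    have XAB: "\<And>i. i \<ge> N \<Longrightarrow> X \<subseteq> A i \<inter> B i" using N XF unfolding X_def LB_def by blast
    have Xeq: "\<And>i. i \<ge> N \<Longrightarrow> A i \<inter> B i = X"
    proof -
      fix i assume iN: "i \<ge> N"
      show "A i \<inter> B i = X"
      proof (rule ccontr)
        assume "A i \<inter> B i \<noteq> X"
        with XAB[OF iN] obtain x where x: "x \<in> A i \<inter> B i" "x \<notin> X" by auto
        have xL: "x \<in> LA - LB" using x X_def LA_def by auto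
        obtain D where D: "tight_component V E (A i \<inter> B i) D" "D \<subseteq> B i - A i"
          using assms(4)[of i] unfolding tight_separation_def by auto
        from D obtain r where r: "r \<in> V - (A i \<inter> B i)"
          and Deq: "D = {z. reach_in E (V - (A i \<inter> B i)) r z}" and nb: "nbh V E D = A i \<inter> B i"
          unfolding tight_component_def component_of_def by auto
        have "y0 \<in> nbh V E D" using nb XAB[OF iN] y0 by auto
        then obtain u where u: "u \<in> D" "E u y0" unfolding nbh_def by auto
        have uF: "u \<in> F" using u(2) sym y0 unfolding F_def by auto
        have uAi: "u \<notin> A i" using u(1) D(2) by auto
        have "u \<notin> LA" using N uF iN uAi by auto
        then have uL: "u \<in> LB - LA" using u(2) inV LAB by auto
        have S: "(V - (A i \<inter> B i)) \<inter> (LA \<inter> LB) = {}" using XAB[OF iN] X_def by auto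
        have S': "(V - (A i \<inter> B i)) \<inter> (LB \<inter> LA) = {}" using S by auto
        have rL: "r \<in> LB - LA"
        proof (rule ccontr)
          assume "r \<notin> LB - LA"
          with r LAB X_def XAB[OF iN] have rA: "r \<in> LA - LB" by auto
          have "reach_in E (V - (A i \<inter> B i)) r u" using u(1) Deq by auto
          from side[OF g sepL this S rA] uL show False by auto
        qed
        from x(1) nb have "x \<in> nbh V E D" by auto
        then obtain d where d: "d \<in> D" "E d x" unfolding nbh_def by auto
        have "reach_in E (V - (A i \<inter> B i)) r d" using d(1) Deq by auto
        from side[OF g sepL' this S' rL] have "d \<in> LB - LA" .
        then show False using sepL xL d(2) sym unfolding separation_def by blast
      qed
    qed
    have AiLA: "\<And>i. i \<ge> N \<Longrightarrow> A i = LA"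
    proof
      fix i assume iN: "i \<ge> N"
      show "A i \<subseteq> LA" by (auto simp: LA_def)
      show "LA \<subseteq> A i"
      proof
        fix z assume z: "z \<in> LA"
        show "z \<in> A i"
        proof (cases "z \<in> X")
          case True then show ?thesis using XAB[OF iN] by auto
        next
          case False
          have zV: "z \<in> V" using z LAB by auto
          have "reach_in E V z y0" using assms(2) zV y0 XV unfolding connected_graph_def by auto
          then obtain f y' where f: "reach_in E (V - X) z f" "y' \<in> X" "E f y'"
            using path_to_set[of V E z y0 X] zV False y0 unfolding reach_in_def by blast
          have fF: "f \<in> F" using f sym unfolding F_def by auto
          have zL: "z \<in> LA - LB" using z False X_def by auto
          have S: "(V - X) \<inter> (LA \<inter> LB) = {}" using X_def by auto
          have fL: "f \<in> LA - LB" using side[OF g sepL f(1) S zL] .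
          then have fAi: "f \<in> A i - B i" using N fF iN by auto
          show ?thesis
          proof (rule ccontr)
            assume "z \<notin> A i"
            then have zB: "z \<in> B i - A i" using zV AB_V[of i] by auto
            have S2: "(V - X) \<inter> (B i \<inter> A i) = {}" using Xeq[OF iN] by auto
            from side[OF g sep_swap[OF g sepi[of i]] f(1) S2 zB] fAi show False by auto
          qed
        qed
      qed
    qed
    have Bi: "\<And>i. i \<ge> N \<Longrightarrow> B i = (V - LA) \<union> X"
    proof -
      fix i assume iN: "i \<ge> N"
      show "B i = (V - LA) \<union> X" using AB_V[of i] Xeq[OF iN] AiLA[OF iN] by auto
    qed
    have "(A N, B N) = (A (Suc N), B (Suc N))" using AiLA Bi by auto
    with assms(5)[of N] show False unfolding sep_less_def by auto
  qed
qed

end
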